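(* Consider the variety of nonempty sets (i.e. left $S$-acts over the trivial monoid $S=\{1\}$). Two nonempty sets $G_1,G_2$ are geometrically equivalent if and only if either $|G_1|=|G_2|=1$, or both $|G_1|\ge 2$ and $|G_2|\ge 2$. Thus there are exactly two geometric equivalence classes: the singletons, and all sets with more than one element.
   Context: For nonempty sets, the free object on a nonempty finite set $X$ is $X$ itself, homomorphisms are arbitrary maps, and congruences are equivalence relations. For a set $G$ and a binary relation $T\subseteq X\times X$, let $T'_G=\{\mu:X\to G : T\subseteq\ker\mu\}$, where $\ker\mu=\{(x,y):\mu(x)=\mu(y)\}$, and $T''_G=\bigcap_{\mu\in T'_G}\ker\mu$ (empty intersection $=X\times X$). Sets $G_1,G_2$ are geometrically equivalent iff $T''_{G_1}=T''_{G_2}$ for every nonempty finite set $X$ and every relation $T\subseteq X\times X$. *)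

theory Defs
  imports Main
begin

definition ker_on :: "'x set \<Rightarrow> ('x \<Rightarrow> 'g) \<Rightarrow> ('x \<times> 'x) set" where
  "ker_on X mu = {(x, y). x \<in> X \<and> y \<in> X \<and> mu x = mu y}"

definition T_prime :: "'g set \<Rightarrow> 'x set \<Rightarrow> ('x \<times> 'x) set \<Rightarrow> ('x \<Rightarrow> 'g) set" where
  "T_prime G X T = {mu. mu ` X \<subseteq> G \<and> T \<subseteq> ker_on X mu}"

text \<open>T''_G: intersection of the kernels (empty intersection = X x X).\<close>
definition T_closure :: "'g set \<Rightarrow> 'x set \<Rightarrow> ('x \<times> 'x) set \<Rightarrow> ('x \<times> 'x) set" where
  "T_closure G X T = (X \<times> X) \<inter> (\<Inter>mu \<in> T_prime G X T. ker_on X mu)"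

text \<open>Geometric equivalence; finite nonempty sets X are represented (up to bijection)
  by finite nonempty sets of natural numbers.\<close>
definition geom_equiv :: "'g1 set \<Rightarrow> 'g2 set \<Rightarrow> bool" where
  "geom_equiv G1 G2 \<longleftrightarrow>
     (\<forall>X :: nat set. finite X \<and> X \<noteq> {} \<longrightarrow>
        (\<forall>T. T \<subseteq> X \<times> X \<longrightarrow> T_closure G1 X T = T_closure G2 X T))"

end

theory Submission
  imports Defs
begin

definition sat :: "nat set \<Rightarrow> (nat \<times> nat) set \<Rightarrow> (nat \<times> nat) set" where
  "sat X T = {(x,y). x \<in> X \<and> y \<in> X \<and> (\<forall>A. (\<forall>(u,v)\<in>T. u\<in>A \<longleftrightarrow> v\<in>A) \<longrightarrow> (x\<in>A \<longleftrightarrow> y\<in>A))}"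

lemma closure_single:
  assumes "G = {a}"
  shows "T_closure G X T = X \<times> X"
  using assms unfolding T_closure_def T_prime_def ker_on_def by auto

lemma closure_two:
  assumes "g1 \<in> G" "g2 \<in> G" "g1 \<noteq> g2" "T \<subseteq> X \<times> X"
  shows "T_closure G X (T::(nat\<times>nat) set) = sat X T"
proof
  show "T_closure G X T \<subseteq> sat X T"
  proof
    fix p assume p: "p \<in> T_closure G X T"
    obtain x y where pxy: "p = (x,y)" by (cases p)
    have xy: "x \<in> X" "y \<in> X" using p pxy unfolding T_closure_def by auto
    have "x\<in>A \<longleftrightarrow> y\<in>A" if A: "\<forall>(u,v)\<in>T. u\<in>A \<longleftrightarrow> v\<in>A" for A
    proof -
      define mu where "mu = (\<lambda>z. if z \<in> A then g1 else g2)"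
      have "mu \<in> T_prime G X T"
        unfolding T_prime_def ker_on_def mu_def using assms A by auto
      then have "(x,y) \<in> ker_on X mu" using p pxy unfolding T_closure_def by auto
      then show ?thesis unfolding ker_on_def mu_def using assms by (auto split: if_splits)
    qed
    then show "p \<in> sat X T" using xy pxy unfolding sat_def by auto
  qed
next
  show "sat X T \<subseteq> T_closure G X T"
  proof
    fix p assume p: "p \<in> sat X T"
    obtain x y where pxy: "p = (x,y)" by (cases p)
    have xy: "x \<in> X" "y \<in> X" using p pxy unfolding sat_def by auto
    have "(x,y) \<in> ker_on X mu" if mu: "mu \<in> T_prime G X T" for mu
    proof -
      define A where "A = {z. mu z = mu x}"
      have "\<forall>(u,v)\<in>T. u\<in>A \<longleftrightarrow> v\<in>A"
        using mu unfolding T_prime_def ker_on_def A_def by auto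
      then have "x\<in>A \<longleftrightarrow> y\<in>A" using p pxy unfolding sat_def by auto
      then show ?thesis using xy unfolding A_def ker_on_def by auto
    qed
    then show "p \<in> T_closure G X T" using xy pxy unfolding T_closure_def by auto
  qed
qed

lemma closure_two_sep:
  assumes "g1 \<in> G" "g2 \<in> G" "g1 \<noteq> g2"
  shows "(0::nat,1::nat) \<notin> T_closure G {0,1} {}"
proof
  assume h: "(0::nat,1::nat) \<in> T_closure G {0,1} {}"
  define mu where "mu = (\<lambda>z::nat. if z = 0 then g1 else g2)"
  have "mu \<in> T_prime G {0,1} {}" unfolding T_prime_def mu_def using assms by auto
  then have "(0::nat,1::nat) \<in> ker_on {0,1} mu" using h unfolding T_closure_def by auto
  then show False unfolding ker_on_def mu_def using assms by auto
qed

lemma nonempty_cases: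
  assumes "G \<noteq> {}"
  shows "(\<exists>a. G = {a}) \<or> (\<exists>a1 a2. a1 \<in> G \<and> a2 \<in> G \<and> a1 \<noteq> a2)"
  using assms by blast

lemma not_both:
  "(\<exists>a. G = {a}) \<Longrightarrow> (\<exists>a1 a2. a1 \<in> G \<and> a2 \<in> G \<and> a1 \<noteq> a2) \<Longrightarrow> False"
  by blast

theorem theorem3p2:
  fixes G1 :: "'a set" and G2 :: "'b set"
  assumes "G1 \<noteq> {}" and "G2 \<noteq> {}"
  shows "geom_equiv G1 G2 \<longleftrightarrow>
           ((\<exists>a. G1 = {a}) \<and> (\<exists>b. G2 = {b})) \<or>
           ((\<exists>a1 a2. a1 \<in> G1 \<and> a2 \<in> G1 \<and> a1 \<noteq> a2) \<and>
            (\<exists>b1 b2. b1 \<in> G2 \<and> b2 \<in> G2 \<and> b1 \<noteq> b2))"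
proof
  assume ge: "geom_equiv G1 G2"
  have eq: "T_closure G1 {0::nat,1} {} = T_closure G2 {0,1} {}"
    using ge unfolding geom_equiv_def by auto
  show "((\<exists>a. G1 = {a}) \<and> (\<exists>b. G2 = {b})) \<or>
           ((\<exists>a1 a2. a1 \<in> G1 \<and> a2 \<in> G1 \<and> a1 \<noteq> a2) \<and>
            (\<exists>b1 b2. b1 \<in> G2 \<and> b2 \<in> G2 \<and> b1 \<noteq> b2))"
    using nonempty_cases[OF assms(1)] nonempty_cases[OF assms(2)] eq
      closure_single[of G1 _ "{0::nat,1}" "{}"] closure_single[of G2 _ "{0::nat,1}" "{}"]
      closure_two_sep[of _ G1] closure_two_sep[of _ G2]
    by (metis SigmaI insertCI)
next
  assume h: "((\<exists>a. G1 = {a}) \<and> (\<exists>b. G2 = {b})) \<or>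
           ((\<exists>a1 a2. a1 \<in> G1 \<and> a2 \<in> G1 \<and> a1 \<noteq> a2) \<and>
            (\<exists>b1 b2. b1 \<in> G2 \<and> b2 \<in> G2 \<and> b1 \<noteq> b2))"
  show "geom_equiv G1 G2"
    unfolding geom_equiv_def
  proof (intro allI impI)
    fix X :: "nat set" and T assume "finite X \<and> X \<noteq> {}" and T: "T \<subseteq> X \<times> X"
    from h show "T_closure G1 X T = T_closure G2 X T"
    proof
      assume "(\<exists>a. G1 = {a}) \<and> (\<exists>b. G2 = {b})"
      then show ?thesis using closure_single by metis
    next
      assume "(\<exists>a1 a2. a1 \<in> G1 \<and> a2 \<in> G1 \<and> a1 \<noteq> a2) \<and>
            (\<exists>b1 b2. b1 \<in> G2 \<and> b2 \<in> G2 \<and> b1 \<noteq> b2)"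
      then show ?thesis using closure_two[OF _ _ _ T] by metis
    qed
  qed
qed

end
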